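(* Let $(p,q)\in(\mathcal{H}\times\mathcal{H})\setminus\Delta$. Then, for any horizontal vectors $v\in H_p$ and $v'\in H_q$, we have \begin{equation} |\Omega_{\mathcal{H}}(v,v')|=2\cdot\frac{|v|\,|v'|}{d_{\mathcal{H}}(p,q)^2}. \end{equation} Moreover, if $K$ is a Legendrian knot passing through $p$, $q$ and $v$ and $v'$ are tangent to $K$, then the absolute value of the argument of $\Omega_{\mathcal{H}}(v,v')$ equals $\theta_K(p,q)$.
   Context: $\mathcal{H}=\mathbb{C}\times\mathbb{R}$ is the 3-dimensional Heisenberg group with coordinates $(z,u)=(x,y,u)$, group law $(z,u)\cdot(z',u')=(z+z',u+u'-\tfrac{1}{2}\Im(z\overline{z'}))$, horizontal distribution $H$ spanned by $X=\partial_x-\tfrac12 y\,\partial_u$, $Y=\partial_y+\tfrac12 x\,\partial_u$ (orthonormal, norm $|\cdot|$). The Korányi distance is $d_{\mathcal{H}}(p,q)=\|p^{-1}q\|_{\mathcal{H}}$, $\|(x,y,u)\|_{\mathcal{H}}=\sqrt[4]{(x^2+y^2)^2+16u^2}$; $\Delta$ is the diagonal. For $p=(z,u)$ let $A(p)=|z|^2-4iu$, and $\rho(p,q)=A(p^{-1}q)$. The complex 2-form on $(\mathcal{H}\times\mathcal{H})\setminus\Delta$ is $\Omega_{\mathcal{H}}=d_pd_q\log\rho$ (exterior derivatives in the first and second factors). For a Legendrian knot $K$ (smooth embedded closed Legendrian curve) and distinct $p,q\in K$, $\Gamma_K(p,q)$ is the unique $\mathbb{R}$-circle (boundary of a totally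 geodesic totally real surface in the complex hyperbolic ball, with $\partial B^2_{\mathbb{C}}\cong\mathcal{H}\cup\{\infty\}$) through $p$ and $q$ tangent to $K$ at $p$, and $\theta_K(p,q)\in[0,\pi]$ is the angle between $\Gamma_K(p,q)$ and $\Gamma_K(q,p)$, with orientations induced by an orientation of $K$. *)

theory Defs
  imports "HOL-Analysis.Analysis"
begin

text \<open>Points of the Heisenberg group H = C x R, coordinates (z,u); tangent vectors at a point
  are written in the same coordinates (dz, du).\<close>

type_synonym heis = "complex \<times> real"

definition hmult :: "heis \<Rightarrow> heis \<Rightarrow> heis" where
  "hmult p q = (fst p + fst q, snd p + snd q - Im (fst p * cnj (fst q)) / 2)"

definition hinv :: "heis \<Rightarrow> heis" where
  "hinv p = (- fst p, - snd p)"

definition kor_norm :: "heis \<Rightarrow> real" where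
  "kor_norm p = root 4 (((cmod (fst p))\<^sup>2)\<^sup>2 + 16 * (snd p)\<^sup>2)"

definition kor_dist :: "heis \<Rightarrow> heis \<Rightarrow> real" where
  "kor_dist p q = kor_norm (hmult (hinv p) q)"

definition Aof :: "heis \<Rightarrow> complex" where
  "Aof p = complex_of_real ((cmod (fst p))\<^sup>2) - 4 * \<i> * complex_of_real (snd p)"

definition rho :: "heis \<Rightarrow> heis \<Rightarrow> complex" where
  "rho p q = Aof (hmult (hinv p) q)"

definition Xvec :: "heis \<Rightarrow> heis" where
  "Xvec p = (1, - Im (fst p) / 2)"

definition Yvec :: "heis \<Rightarrow> heis" where
  "Yvec p = (\<i>, Re (fst p) / 2)"

definition horiz :: "heis \<Rightarrow> heis set" where
  "horiz p = {a *\<^sub>R Xvec p + b *\<^sub>R Yvec p | a b. True}"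

text \<open>Norm |.| on horizontal vectors (X, Y orthonormal): for v = aX + bY, |v| = sqrt(a^2+b^2),
  which is the modulus of the dz-component of v.\<close>

definition hnorm :: "heis \<Rightarrow> real" where
  "hnorm v = cmod (fst v)"

definition hinner :: "heis \<Rightarrow> heis \<Rightarrow> real" where
  "hinner v w = Re (fst v * cnj (fst w))"

definition hangle :: "heis \<Rightarrow> heis \<Rightarrow> real" where
  "hangle v w = arccos (hinner v w / (hnorm v * hnorm w))"

text \<open>Omega = d_p d_q log rho evaluated on v in T_p H and v' in T_q H, i.e. the mixed second
  directional derivative of log rho (log rho is smooth off the diagonal since Re rho >= 0, rho ~= 0,
  so the principal branch Ln is holomorphic on the range of rho).\<close>

definition Omega :: "heis \<Rightarrow> heis \<Rightarrow> heis \<Rightarrow> heis \<Rightarrow> complex" where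
  "Omega p q v v' =
     vector_derivative
       (\<lambda>s. vector_derivative (\<lambda>t. Ln (rho (p + s *\<^sub>R v) (q + t *\<^sub>R v'))) (at 0)) (at 0)"

text \<open>Smooth (C-infinity) curves, and Legendrian knots as L-periodic smooth regular curves,
  injective on a period, with horizontal tangent vectors; the orientation of the knot is that of
  the parametrisation.\<close>

definition smooth_curve :: "(real \<Rightarrow> heis) \<Rightarrow> bool" where
  "smooth_curve \<kappa> \<longleftrightarrow> (\<exists>D :: nat \<Rightarrow> real \<Rightarrow> heis. D 0 = \<kappa> \<and>
      (\<forall>k t. (D k has_vector_derivative D (Suc k) t) (at t)))"

definition legendrian_knot :: "(real \<Rightarrow> heis) \<Rightarrow> real \<Rightarrow> bool" where
  "legendrian_knot \<kappa> L \<longleftrightarrow> smooth_curve \<kappa> \<and> L > 0 \<and> (\<forall>t. \<kappa> (t + L) = \<kappa> t) \<and>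
      inj_on \<kappa> {0..<L} \<and>
      (\<forall>t. vector_derivative \<kappa> (at t) \<noteq> 0 \<and> vector_derivative \<kappa> (at t) \<in> horiz (\<kappa> t))"

text \<open>Complex hyperbolic plane, projective (Siegel) model: the Hermitian form
  <Z,W> = Z1 conj W3 + Z2 conj W2 + Z3 conj W1 of signature (2,1) on C^3. The boundary point
  (z,u) of H corresponds to the null line through (-|z|^2/2 - 2iu, z, 1) = (-A(z,u)/2, z, 1)
  (this is compatible with the group law above: left translations act by elements of U(2,1)),
  and infinity to the line through (1,0,0).\<close>

definition herm :: "complex^3 \<Rightarrow> complex^3 \<Rightarrow> complex" where
  "herm Z W = Z$1 * cnj (W$3) + Z$2 * cnj (W$2) + Z$3 * cnj (W$1)"

definition unitary21 :: "complex^3^3 \<Rightarrow> bool" where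
  "unitary21 M \<longleftrightarrow> (\<forall>Z W. herm (M *v Z) (M *v W) = herm Z W)"

definition from_lift :: "complex^3 \<Rightarrow> heis" where
  "from_lift Z = (Z$2 / Z$3, - Im (Z$1 / Z$3) / 2)"

text \<open>The standard totally real totally geodesic plane is the projectivisation of R^3 (on which the
  form is real of signature (2,1)); its boundary, the standard R-circle, is parametrised by the real
  null vectors c(t), t in [0,2pi) (c(pi) = infinity). Every R-circle is the image of it under
  some M in U(2,1); rcirc M is the corresponding oriented parametrisation (valid where the third
  homogeneous coordinate is non-zero, i.e. away from infinity).\<close>

definition stdc :: "real \<Rightarrow> complex^3" where
  "stdc t = vector [complex_of_real (- (1 - cos t) / 2), complex_of_real (sin t),
                    complex_of_real (1 + cos t)]"

definition finite_at :: "complex^3^3 \<Rightarrow> real \<Rightarrow> bool" where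
  "finite_at M t \<longleftrightarrow> (M *v stdc t)$3 \<noteq> 0"

definition rcirc :: "complex^3^3 \<Rightarrow> real \<Rightarrow> heis" where
  "rcirc M t = from_lift (M *v stdc t)"

definition is_Gamma ::
  "(real \<Rightarrow> heis) \<Rightarrow> real \<Rightarrow> heis \<Rightarrow> complex^3^3 \<Rightarrow> real \<Rightarrow> real \<Rightarrow> heis \<Rightarrow> bool" where
  "is_Gamma \<kappa> s q M t0 t1 w0 \<longleftrightarrow> unitary21 M \<and> finite_at M t0 \<and> finite_at M t1 \<and>
     rcirc M t0 = \<kappa> s \<and> rcirc M t1 = q \<and>
     (rcirc M has_vector_derivative w0) (at t0) \<and>
     (\<exists>c>0. w0 = c *\<^sub>R vector_derivative \<kappa> (at s))"

end

theory Submission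
  imports Defs
begin


lemma rho_poly: "rho p q = fst p * cnj (fst p) + fst q * cnj (fst q) - 2 * fst p * cnj (fst q)
   + 4 * \<i> * (of_real (snd p) - of_real (snd q))"
  by (simp add: complex_eq_iff rho_def Aof_def hmult_def hinv_def cmod_power2; simp add: algebra_simps power2_eq_square)

lemma horiz_eq: assumes "v \<in> horiz p"
  shows "4 * \<i> * of_real (snd v) = cnj (fst p) * fst v - fst p * cnj (fst v)"
  using assms by (auto simp: horiz_def Xvec_def Yvec_def complex_eq_iff algebra_simps)

lemma rho_nonpos: assumes "p \<noteq> q" shows "rho p q \<notin> \<real>\<^sub>\<le>\<^sub>0"
proof
  assume "rho p q \<in> \<real>\<^sub>\<le>\<^sub>0"
  then have "Im (rho p q) = 0" "Re (rho p q) \<le> 0" by (auto simp: complex_nonpos_Reals_iff)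
  then have "fst (hmult (hinv p) q) = 0" "snd (hmult (hinv p) q) = 0"
    by (auto simp: rho_def Aof_def)
  then show False using assms
    by (cases p, cases q) (auto simp: hmult_def hinv_def)
qed

lemma Omega_formula:
  assumes pq: "p \<noteq> q" and hv: "v \<in> horiz p" and hv': "v' \<in> horiz q"
  shows "Omega p q v v' = 2 * fst v * cnj (fst v') * cnj (rho p q) / (rho p q)^2"
proof -
  obtain z u where p: "p = (z,u)" by (cases p)
  obtain z' u' where q: "q = (z',u')" by (cases q)
  obtain \<alpha> \<beta> where v: "v = (\<alpha>,\<beta>)" by (cases v)
  obtain \<alpha>' \<beta>' where v': "v' = (\<alpha>',\<beta>')" by (cases v')
  define G where "G x y = (z + x*\<alpha>) * (cnj z + x * cnj \<alpha>) + (z' + y*\<alpha>')*(cnj z' + y*cnj \<alpha>')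
     - 2*(z + x*\<alpha>)*(cnj z' + y * cnj \<alpha>') + 4*\<i>*(of_real u + x * of_real \<beta> - of_real u' - y * of_real \<beta>')"
    for x y :: complex
  have Geq: "rho (p + s *\<^sub>R v) (q + t *\<^sub>R v') = G (of_real s) (of_real t)" for s t
    unfolding G_def rho_poly by (simp add: p q v v' scaleR_conv_of_real algebra_simps)
  define Gy where "Gy x = \<alpha>'*(cnj z') + cnj \<alpha>' * z' - 2*(z + x*\<alpha>)*cnj \<alpha>' - 4*\<i>* of_real \<beta>'" for x
  have dGy: "((\<lambda>y. G x y) has_field_derivative Gy x) (at 0)" for x
    unfolding G_def Gy_def
    by (rule derivative_eq_intros refl)+ (simp add: algebra_simps)
  have G00: "G 0 0 = rho p q" using Geq[of 0 0] by simp
  have G00n: "G 0 0 \<notin> \<real>\<^sub>\<le>\<^sub>0" using G00 rho_nonpos[OF pq] by simp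
  define S where "S = (\<lambda>s. G (of_real s) 0) -` (- \<real>\<^sub>\<le>\<^sub>0)"
  have contG: "continuous_on UNIV (\<lambda>s. G (of_real s) 0)"
    unfolding G_def by (intro continuous_intros)
  have "open S" unfolding S_def
    by (rule open_vimage) (use contG in auto)
  have "0 \<in> S" using G00n by (simp add: S_def)
  have inner: "vector_derivative (\<lambda>t. Ln (rho (p + s *\<^sub>R v) (q + t *\<^sub>R v'))) (at 0)
       = Gy (of_real s) / G (of_real s) 0" if "s \<in> S" for s
  proof -
    have n: "G (of_real s) 0 \<notin> \<real>\<^sub>\<le>\<^sub>0" using that by (simp add: S_def)
    have "((\<lambda>y. Ln (G (of_real s) y)) has_field_derivative inverse (G (of_real s) 0) * Gy (of_real s)) (at (of_real 0))"
      using DERIV_chain2[OF has_field_derivative_Ln[OF n] dGy] by simp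
    from has_vector_derivative_real_field[OF this]
    have "((\<lambda>t. Ln (rho (p + s *\<^sub>R v) (q + t *\<^sub>R v'))) has_vector_derivative inverse (G (of_real s) 0) * Gy (of_real s)) (at 0)"
      by (simp add: Geq)
    then show ?thesis by (simp add: vector_derivative_at divide_inverse mult.commute)
  qed
  define h where "h x = Gy x / G x 0" for x
  define Gx0 where "Gx0 = \<alpha> * cnj z + z * cnj \<alpha> - 2 * \<alpha> * cnj z' + 4*\<i>* of_real \<beta>"
  have dG: "((\<lambda>x. G x 0) has_field_derivative Gx0) (at 0)"
    unfolding G_def Gx0_def
    by (rule derivative_eq_intros refl)+ (simp add: algebra_simps)
  have dGy2: "(Gy has_field_derivative (-2*\<alpha>*cnj \<alpha>')) (at 0)"
    unfolding Gy_def
    by (rule derivative_eq_intros refl)+ (simp add: algebra_simps)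
  have G00nz: "G 0 0 \<noteq> 0" using G00n by auto
  have "(h has_field_derivative ((-2*\<alpha>*cnj \<alpha>') * G 0 0 - Gy 0 * Gx0) / (G 0 0 * G 0 0)) (at (of_real 0))"
    unfolding h_def using DERIV_divide[OF dGy2 dG G00nz] by simp
  from has_vector_derivative_real_field[OF this]
  have "((\<lambda>s. h (of_real s)) has_vector_derivative ((-2*\<alpha>*cnj \<alpha>') * G 0 0 - Gy 0 * Gx0) / (G 0 0 * G 0 0)) (at 0)" .
  then have "((\<lambda>s. vector_derivative (\<lambda>t. Ln (rho (p + s *\<^sub>R v) (q + t *\<^sub>R v'))) (at 0))
     has_vector_derivative ((-2*\<alpha>*cnj \<alpha>') * G 0 0 - Gy 0 * Gx0) / (G 0 0 * G 0 0)) (at 0)"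
    by (rule has_vector_derivative_transform_within_open[OF _ \<open>open S\<close> \<open>0 \<in> S\<close>])
       (simp add: inner h_def)
  then have Om: "Omega p q v v' = ((-2*\<alpha>*cnj \<alpha>') * G 0 0 - Gy 0 * Gx0) / (G 0 0 * G 0 0)"
    unfolding Omega_def by (rule vector_derivative_at)
  have hb: "4 * \<i> * of_real \<beta> = cnj z * \<alpha> - z * cnj \<alpha>" using horiz_eq[OF hv] by (simp add: p v)
  have hb': "4 * \<i> * of_real \<beta>' = cnj z' * \<alpha>' - z' * cnj \<alpha>'" using horiz_eq[OF hv'] by (simp add: q v')
  have cG: "cnj (G 0 0) = z * cnj z + z' * cnj z' - 2 * cnj z * z' - 4 * \<i> * (of_real u - of_real u')"
    by (simp add: G_def)
  have GG: "G 0 0 = z * cnj z + z' * cnj z' - 2 * z * cnj z' + 4 * \<i> * (of_real u - of_real u')"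
    by (simp add: G_def algebra_simps)
  have Gx0': "Gx0 = 2 * \<alpha> * (cnj z - cnj z')" unfolding Gx0_def hb by (simp add: algebra_simps)
  have "Gy 0 = \<alpha>' * cnj z' + cnj \<alpha>' * z' - 2 * z * cnj \<alpha>' - 4 * \<i> * of_real \<beta>'"
    by (simp add: Gy_def)
  also have "\<dots> = 2 * cnj \<alpha>' * (z' - z)" unfolding hb' by (simp add: algebra_simps)
  finally have Gy0': "Gy 0 = 2 * cnj \<alpha>' * (z' - z)" .
  have key: "(-2*\<alpha>*cnj \<alpha>') * G 0 0 - Gy 0 * Gx0 = 2 * \<alpha> * cnj \<alpha>' * cnj (G 0 0)"
    unfolding Gx0' Gy0' cG GG by (simp add: algebra_simps)
  show ?thesis unfolding Om key unfolding G00 by (simp add: p q v v' power2_eq_square)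
qed



definition sdc :: "real \<Rightarrow> complex^3" where
  "sdc t = vector [complex_of_real (- sin t / 2), complex_of_real (cos t), complex_of_real (- sin t)]"

lemma mv3: "(M *v x) $ i = M$i$1 * x$1 + M$i$2 * x$2 + M$i$3 * x$3" for M :: "complex^3^3"
  by (simp add: matrix_vector_mult_def sum_3)

lemma dcomp: "((\<lambda>t. (M *v stdc t) $ i) has_vector_derivative (M *v sdc t) $ i) (at t)"
  for M :: "complex^3^3"
proof -
  have h1: "((\<lambda>t. complex_of_real (-(1 - cos t)/2)) has_vector_derivative of_real (- sin t/2)) (at t)"
    by (rule has_vector_derivative_of_real) (auto intro!: derivative_eq_intros)
  have h2: "((\<lambda>t. complex_of_real (sin t)) has_vector_derivative of_real (cos t)) (at t)"
    by (rule has_vector_derivative_of_real) (auto intro!: derivative_eq_intros)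
  have h3: "((\<lambda>t. complex_of_real (1 + cos t)) has_vector_derivative of_real (- sin t)) (at t)"
    by (rule has_vector_derivative_of_real) (auto intro!: derivative_eq_intros)
  show ?thesis
    unfolding mv3 stdc_def sdc_def vector_3
    by (intro has_vector_derivative_add has_vector_derivative_mult_right h1 h2 h3)
qed

lemma rcirc_deriv_fst:
  assumes "finite_at N t" and "(rcirc N has_vector_derivative w) (at t)"
  shows "fst w = ((N *v sdc t)$2 * (N *v stdc t)$3 - (N *v stdc t)$2 * (N *v sdc t)$3) / ((N *v stdc t)$3)^2"
proof -
  let ?P = "\<lambda>i t. (N *v stdc t) $ i" and ?D = "\<lambda>i. (N *v sdc t) $ i"
  have n: "?P 3 t \<noteq> 0" using assms(1) by (simp add: finite_at_def)
  have fw: "((\<lambda>t. fst (rcirc N t)) has_vector_derivative fst w) (at t)"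
    using bounded_linear.has_vector_derivative[OF bounded_linear_fst assms(2)] by simp
  have di: "(inverse has_field_derivative - (inverse (?P 3 t) ^ 2)) (at (?P 3 t))"
    using DERIV_inverse[OF n, of UNIV] unfolding power2_eq_square by simp
  have "((inverse \<circ> ?P 3) has_vector_derivative (?D 3 * - (inverse (?P 3 t) ^ 2))) (at t)"
    by (rule field_vector_diff_chain_at[OF dcomp di])
  then have inv: "((\<lambda>t. inverse (?P 3 t)) has_vector_derivative (?D 3 * - (inverse (?P 3 t) ^ 2))) (at t)"
    by (simp only: o_def)
  have "((\<lambda>t. ?P 2 t * inverse (?P 3 t)) has_vector_derivative
      (?P 2 t * (?D 3 * - (inverse (?P 3 t) ^ 2)) + ?D 2 * inverse (?P 3 t))) (at t)"
    by (rule has_vector_derivative_mult[OF dcomp inv])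
  moreover have "(\<lambda>t. fst (rcirc N t)) = (\<lambda>t. ?P 2 t * inverse (?P 3 t))"
    by (simp only: rcirc_def from_lift_def fst_conv divide_inverse)
  ultimately have "((\<lambda>t. fst (rcirc N t)) has_vector_derivative
      (?P 2 t * (?D 3 * - (inverse (?P 3 t) ^ 2)) + ?D 2 * inverse (?P 3 t))) (at t)"
    by (simp only:)
  with fw have "fst w = ?P 2 t * (?D 3 * - (inverse (?P 3 t) ^ 2)) + ?D 2 * inverse (?P 3 t)"
    using vector_derivative_unique_at by blast
  moreover have "\<And>a b c d::complex. c \<noteq> 0 \<Longrightarrow> a*(b* -(inverse c^2)) + d*inverse c = (d*c - a*b)/c^2"
    by (simp add: field_simps power2_eq_square)
  ultimately show ?thesis using n by metis
qed

lemma herm_stdc: "herm (stdc a) (stdc b) = of_real (cos a * cos b + sin a * sin b - 1)"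
  by (simp add: herm_def stdc_def complex_eq_iff; simp add: algebra_simps add_divide_distrib diff_divide_distrib)
lemma herm_sdc1: "herm (stdc a) (sdc b) = of_real (sin a * cos b - cos a * sin b)"
  by (simp add: herm_def stdc_def sdc_def complex_eq_iff; simp add: algebra_simps add_divide_distrib diff_divide_distrib)
lemma herm_sdc2: "herm (sdc a) (stdc b) = of_real (cos a * sin b - sin a * cos b)"
  by (simp add: herm_def stdc_def sdc_def complex_eq_iff; simp add: algebra_simps add_divide_distrib diff_divide_distrib)
lemma herm_sdc3: "herm (sdc a) (sdc b) = of_real (sin a * sin b + cos a * cos b)"
  by (simp add: herm_def stdc_def sdc_def complex_eq_iff; simp add: algebra_simps add_divide_distrib diff_divide_distrib)

lemma trig_id: "(cos a * cos b + sin a * sin b - 1) * (sin a * sin b + cos a * cos b)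
   - (sin a * cos b - cos a * sin b) * (cos a * sin b - sin a * cos b) = - (cos a * cos b + sin a * sin b - 1)" for a b :: real
proof -
  show ?thesis using sin_cos_squared_add[of a] sin_cos_squared_add[of b] by algebra
qed

lemma arccos_Arg: assumes "x \<noteq> 0" shows "arccos (Re x / cmod x) = \<bar>Arg x\<bar>"
proof -
  have "Re x = cmod x * cos (Arg x)"
    by (metis Re_rcis rcis_cmod_Arg)
  then have c: "Re x / cmod x = cos \<bar>Arg x\<bar>" using assms by simp
  have "0 \<le> \<bar>Arg x\<bar>" "\<bar>Arg x\<bar> \<le> pi" using Arg_bounded[of x] by auto
  then show ?thesis unfolding c by (rule arccos_cos)
qed



lemma lift_decomp:
  fixes P X :: "complex^3"
  assumes n: "P$3 \<noteq> 0" and fl: "from_lift P = (z,u)" and hP: "herm P P = 0" and hX: "herm X P = 0"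
  defines "\<omega> \<equiv> (X$2 * P$3 - P$2 * X$3) / (P$3)^2"
  shows "P$1 = P$3 * (-(z*cnj z)/2 - 2*\<i>* of_real u)" "P$2 = P$3 * z"
    "X$2 = P$3 * \<omega> + z * X$3" "X$1 = - X$2 * cnj z - X$3 * (-(z*cnj z)/2 + 2*\<i>* of_real u)"
proof -
  define \<zeta> where "\<zeta> = P$1 / P$3"
  have z: "z = P$2 / P$3" and u: "u = - Im \<zeta> / 2" using fl by (auto simp: from_lift_def \<zeta>_def)
  have P1: "P$1 = P$3 * \<zeta>" and P2: "P$2 = P$3 * z" using n by (simp_all add: \<zeta>_def z)
  have "(\<zeta> + cnj \<zeta> + z * cnj z) * (P$3 * cnj (P$3)) = 0"
    using hP unfolding herm_def P1 P2 by (simp add: algebra_simps)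
  moreover have "P$3 * cnj (P$3) \<noteq> 0" using n by simp
  ultimately have e: "\<zeta> + cnj \<zeta> + z * cnj z = 0" by simp
  have "Re \<zeta> = - (Re z ^ 2 + Im z ^ 2) / 2"
    using arg_cong[OF e, of Re] by (simp add: power2_eq_square)
  then have \<zeta>eq: "\<zeta> = -(z*cnj z)/2 - 2*\<i>* of_real u"
    by (simp add: complex_eq_iff u power2_eq_square field_simps)
  show "P$1 = P$3 * (-(z*cnj z)/2 - 2*\<i>* of_real u)" using P1 \<zeta>eq by simp
  show "P$2 = P$3 * z" by (rule P2)
  show "X$2 = P$3 * \<omega> + z * X$3" using n unfolding \<omega>_def z by (simp add: field_simps power2_eq_square)
  have "cnj (P$3) * (X$1 + X$2 * cnj z + X$3 * cnj \<zeta>) = 0"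
    using hX unfolding herm_def P1 P2 by (simp add: algebra_simps)
  then have "X$1 + X$2 * cnj z + X$3 * cnj \<zeta> = 0" using n by simp
  then show "X$1 = - X$2 * cnj z - X$3 * (-(z*cnj z)/2 + 2*\<i>* of_real u)"
    using \<zeta>eq by (simp add: algebra_simps)
qed

lemma herm_id:
  fixes P X Q Y :: "complex^3"
  assumes "P$1 = P$3 * (-(z*cnj z)/2 - 2*\<i>* of_real u)" "P$2 = P$3 * z"
    "X$2 = P$3 * w + z * X$3" "X$1 = - X$2 * cnj z - X$3 * (-(z*cnj z)/2 + 2*\<i>* of_real u)"
  assumes "Q$1 = Q$3 * (-(z'*cnj z')/2 - 2*\<i>* of_real u')" "Q$2 = Q$3 * z'"
    "Y$2 = Q$3 * w' + z' * Y$3" "Y$1 = - Y$2 * cnj z' - Y$3 * (-(z'*cnj z')/2 + 2*\<i>* of_real u')"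
  shows "herm P Q * herm X Y - herm P Y * herm X Q
      = (P$3)^2 * (cnj (Q$3))^2 * w * cnj w' * cnj (rho (z,u) (z',u')) / 2"
    and "herm P Q = - P$3 * cnj (Q$3) * rho (z,u) (z',u') / 2"
  unfolding herm_def rho_poly
  subgoal by (simp only: assms(4) assms(8); simp only: assms(1,2,3,5,6,7); simp add: field_simps power2_eq_square)
  subgoal by (simp only: assms(1,2,5,6); simp add: field_simps power2_eq_square)
  done



lemma root4_sq: assumes "0 \<le> y" shows "(root 4 y)^2 = sqrt y"
proof -
  have "(root 4 y ^ 2) ^ 2 = y" using real_root_pow_pos2[of 4 y] assms
    by (simp add: power_mult[symmetric])
  moreover have "0 \<le> root 4 y ^ 2" by simp
  ultimately show ?thesis using real_sqrt_unique by metis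
qed

lemma cmod_rho: "cmod (rho p q) = (kor_dist p q)^2"
proof -
  obtain a b where h: "hmult (hinv p) q = (a,b)" by (cases "hmult (hinv p) q")
  have "cmod (rho p q) = sqrt (((cmod a)^2)^2 + 16 * b^2)"
    by (simp add: rho_def h Aof_def cmod_def power_mult_distrib)
  also have "\<dots> = (kor_dist p q)^2"
    by (simp add: kor_dist_def h kor_norm_def root4_sq)
  finally show ?thesis .
qed

lemma horiz_fst_nz: assumes "v \<in> horiz p" "v \<noteq> 0" shows "fst v \<noteq> 0"
  using assms by (auto simp: horiz_def Xvec_def Yvec_def complex_eq_iff prod_eq_iff)



theorem proposition6p2:
  fixes p q v v' :: heis
  assumes "p \<noteq> q" and "v \<in> horiz p" and "v' \<in> horiz q"
  shows "cmod (Omega p q v v') = 2 * (hnorm v * hnorm v') / (kor_dist p q)\<^sup>2 \<and>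
    (\<forall>\<kappa> L s s' a b M t0 t1 w0 N t2 t3 w1 w.
           legendrian_knot \<kappa> L \<and> \<kappa> s = p \<and> \<kappa> s' = q \<and>
           a > 0 \<and> b > 0 \<and>
           v = a *\<^sub>R vector_derivative \<kappa> (at s) \<and> v' = b *\<^sub>R vector_derivative \<kappa> (at s') \<and>
           is_Gamma \<kappa> s q M t0 t1 w0 \<and>
           is_Gamma \<kappa> s' p N t2 t3 w1 \<and> (rcirc N has_vector_derivative w) (at t3)
           \<longrightarrow> \<bar>Arg (Omega p q v v')\<bar> = hangle w0 w)"
proof -
  note Om = Omega_formula[OF assms]
  have rnz: "rho p q \<noteq> 0" using rho_nonpos[OF assms(1)] by auto
  have part1: "cmod (Omega p q v v') = 2 * (hnorm v * hnorm v') / (kor_dist p q)\<^sup>2"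
    unfolding Om hnorm_def cmod_rho[symmetric] using rnz
    by (simp add: norm_mult norm_divide norm_power power2_eq_square)
  show ?thesis
  proof (intro conjI part1 allI impI)
    fix \<kappa> L s s' a b M t0 t1 w0 N t2 t3 w1 w
    assume H: "legendrian_knot \<kappa> L \<and> \<kappa> s = p \<and> \<kappa> s' = q \<and>
           a > 0 \<and> b > 0 \<and>
           v = a *\<^sub>R vector_derivative \<kappa> (at s) \<and> v' = b *\<^sub>R vector_derivative \<kappa> (at s') \<and>
           is_Gamma \<kappa> s q M t0 t1 w0 \<and>
           is_Gamma \<kappa> s' p N t2 t3 w1 \<and> (rcirc N has_vector_derivative w) (at t3)"
    then have LK: "legendrian_knot \<kappa> L" and ks: "\<kappa> s = p" and ks': "\<kappa> s' = q"
      and a: "a > 0" and b: "b > 0"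
      and v: "v = a *\<^sub>R vector_derivative \<kappa> (at s)"
      and v': "v' = b *\<^sub>R vector_derivative \<kappa> (at s')"
      and G1: "is_Gamma \<kappa> s q M t0 t1 w0" and G2: "is_Gamma \<kappa> s' p N t2 t3 w1"
      and dw: "(rcirc N has_vector_derivative w) (at t3)" by auto
    define k where "k = fst (vector_derivative \<kappa> (at s))"
    define k' where "k' = fst (vector_derivative \<kappa> (at s'))"
    have knz: "k \<noteq> 0" using LK horiz_fst_nz unfolding legendrian_knot_def k_def by blast
    obtain c where c: "c > 0" "w0 = c *\<^sub>R vector_derivative \<kappa> (at s)"
      using G1 unfolding is_Gamma_def by blast
    obtain c1 where c1: "c1 > 0" "w1 = c1 *\<^sub>R vector_derivative \<kappa> (at s')"
      using G2 unfolding is_Gamma_def by blast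
    have U: "unitary21 N" and f2: "finite_at N t2" and f3: "finite_at N t3"
      and r2: "rcirc N t2 = q" and r3: "rcirc N t3 = p"
      and dw1: "(rcirc N has_vector_derivative w1) (at t2)"
      using G2 ks' unfolding is_Gamma_def by auto
    define P where "P = N *v stdc t3"
    define X where "X = N *v sdc t3"
    define Q where "Q = N *v stdc t2"
    define Y where "Y = N *v sdc t2"
    have hN: "herm (N *v x) (N *v y) = herm x y" for x y using U unfolding unitary21_def by blast
    obtain z u where p: "p = (z,u)" by (cases p)
    obtain z' u' where q: "q = (z',u')" by (cases q)
    have P3: "P$3 \<noteq> 0" using f3 by (simp add: finite_at_def P_def)
    have Q3: "Q$3 \<noteq> 0" using f2 by (simp add: finite_at_def Q_def)
    have flP: "from_lift P = (z,u)" using r3 p by (simp add: rcirc_def P_def)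
    have flQ: "from_lift Q = (z',u')" using r2 q by (simp add: rcirc_def Q_def)
    have hPP: "herm P P = 0" unfolding P_def hN herm_stdc
      by (simp add: power2_eq_square[symmetric])
    have hQQ: "herm Q Q = 0" unfolding Q_def hN herm_stdc
      by (simp add: power2_eq_square[symmetric])
    have hXP: "herm X P = 0" unfolding P_def X_def hN herm_sdc2 by simp
    have hYQ: "herm Y Q = 0" unfolding Q_def Y_def hN herm_sdc2 by simp
    define \<omega> where "\<omega> = fst w"
    define \<omega>' where "\<omega>' = fst w1"
    have \<omega>: "\<omega> = (X$2 * P$3 - P$2 * X$3) / (P$3)^2"
      unfolding \<omega>_def X_def P_def by (rule rcirc_deriv_fst[OF f3 dw])
    have \<omega>': "\<omega>' = (Y$2 * Q$3 - Q$2 * Y$3) / (Q$3)^2"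
      unfolding \<omega>'_def Y_def Q_def by (rule rcirc_deriv_fst[OF f2 dw1])
    note dP = lift_decomp[OF P3 flP hPP hXP, folded \<omega>]
    note dQ = lift_decomp[OF Q3 flQ hQQ hYQ, folded \<omega>']
    note HI = herm_id[OF dP dQ, folded p q]
    define R1 where "R1 = cos t3 * cos t2 + sin t3 * sin t2 - 1"
    define \<rho> where "\<rho> = rho p q"
    have A1: "herm P Q = of_real R1" unfolding P_def Q_def hN herm_stdc R1_def ..
    have A2: "herm P Y = of_real (sin t3 * cos t2 - cos t3 * sin t2)" unfolding P_def Y_def hN herm_sdc1 ..
    have A3: "herm X Q = of_real (cos t3 * sin t2 - sin t3 * cos t2)" unfolding X_def Q_def hN herm_sdc2 ..
    have A4: "herm X Y = of_real (sin t3 * sin t2 + cos t3 * cos t2)" unfolding X_def Y_def hN herm_sdc3 ..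
    have T: "R1 * (sin t3 * sin t2 + cos t3 * cos t2) - (sin t3 * cos t2 - cos t3 * sin t2) * (cos t3 * sin t2 - sin t3 * cos t2) = - R1"
      unfolding R1_def by (rule trig_id)
    have I1: "of_real (- R1) = (P$3)^2 * (cnj (Q$3))^2 * \<omega> * cnj \<omega>' * cnj \<rho> / 2"
      using HI(1) unfolding A1 A2 A3 A4 \<rho>_def T[symmetric] by simp
    have I2: "of_real R1 = - P$3 * cnj (Q$3) * \<rho> / 2"
      using HI(2) unfolding A1 \<rho>_def .
    have rnz': "\<rho> \<noteq> 0" using rnz by (simp add: \<rho>_def)
    have R1nz: "R1 \<noteq> 0" using I2 P3 Q3 rnz' by auto
    have "R1 \<le> 0" unfolding R1_def using cos_diff[of t3 t2] cos_le_one[of "t3 - t2"] by linarith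
    with R1nz have R1neg: "R1 < 0" by simp
    define r where "r = - 1 / (2 * R1)"
    have rpos: "r > 0" unfolding r_def using R1neg by (simp add: divide_pos_neg)
    have e1: "\<omega> * cnj \<omega>' * cnj \<rho> = - 2 * of_real R1 / ((P$3)^2 * (cnj (Q$3))^2)"
      using I1 P3 Q3 by (simp add: field_simps)
    have e2: "\<rho> = - 2 * of_real R1 / (P$3 * cnj (Q$3))"
      using I2 P3 Q3 by (simp add: field_simps)
    have key: "\<omega> * cnj \<omega>' * cnj \<rho> / \<rho>^2 = of_real r"
    proof -
      have "\<omega> * cnj \<omega>' * cnj \<rho> / \<rho>^2 = (- 2 * of_real R1 / ((P$3)^2 * (cnj (Q$3))^2)) / \<rho>^2"
        by (simp only: e1)
      also have "\<dots> = (- 2 * of_real R1 / ((P$3)^2 * (cnj (Q$3))^2)) / (- 2 * of_real R1 / (P$3 * cnj (Q$3)))^2"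
        by (simp only: e2)
      also have "\<dots> = of_real r" unfolding r_def using P3 Q3 R1nz
        by (simp add: field_simps power2_eq_square)
      finally show ?thesis .
    qed
    have \<omega>'k: "\<omega>' = of_real c1 * k'" unfolding \<omega>'_def k'_def c1(2) by (simp add: scaleR_conv_of_real)
    have \<alpha>: "fst v = of_real a * k" unfolding v k_def by (simp add: scaleR_conv_of_real)
    have \<alpha>': "fst v' = of_real b * k'" unfolding v' k'_def by (simp add: scaleR_conv_of_real)
    have w0k: "fst w0 = of_real c * k" unfolding c(2) k_def by (simp add: scaleR_conv_of_real)
    define E where "E = cnj k' * cnj \<rho> / \<rho>^2"
    have "\<omega> * of_real c1 * E = of_real r" using key unfolding E_def \<omega>'k by (simp add: algebra_simps)
    moreover have \<omega>nz: "\<omega> \<noteq> 0" using calculation rpos by auto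
    ultimately have Ee: "E = of_real r / (\<omega> * of_real c1)"
      using c1(1) by (auto simp: field_simps)
    have nsq: "complex_of_real (cmod \<omega>) * complex_of_real (cmod \<omega>) = \<omega> * cnj \<omega>"
      using complex_norm_square[of \<omega>] by (simp add: power2_eq_square)
    define K where "K = 2 * a * b * r / (c1 * c * (cmod \<omega>)^2)"
    have Kpos: "K > 0" unfolding K_def using a b rpos c1(1) c(1) \<omega>nz by simp
    have "Omega p q v v' = 2 * of_real a * of_real b * k * E"
      unfolding Om E_def \<alpha> \<alpha>' \<rho>_def by (simp add: algebra_simps)
    also have "\<dots> = of_real K * (fst w0 * cnj \<omega>)"
      unfolding Ee w0k K_def using \<omega>nz c(1) c1(1) nsq
      by (simp add: field_simps power2_eq_square)
    finally have OmK: "Omega p q v v' = of_real K * (fst w0 * cnj \<omega>)" .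
    have xnz: "fst w0 * cnj \<omega> \<noteq> 0" using w0k knz c(1) \<omega>nz by simp
    have "hangle w0 w = arccos (Re (fst w0 * cnj \<omega>) / cmod (fst w0 * cnj \<omega>))"
      unfolding hangle_def hinner_def hnorm_def \<omega>_def by (simp add: norm_mult)
    also have "\<dots> = \<bar>Arg (fst w0 * cnj \<omega>)\<bar>" by (rule arccos_Arg[OF xnz])
    finally show "\<bar>Arg (Omega p q v v')\<bar> = hangle w0 w" unfolding OmK using Kpos by simp
  qed
qed

end
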